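(* Let $L:G\to\mathcal{L}$ be a labeling function on a finite abelian group $G$. If $L$ is $3$-friendly, then $L$ is friendly, i.e. $m$-friendly for every $m\ge 3$.
   Context: Let $G$ be a finite abelian group written additively, $\mathcal{L}$ a finite set, and $L:G\to\mathcal{L}$ any function. For $m\ge3$ let $Z_m=\{(g_1,\dots,g_m)\in G^m: g_1+\cdots+g_{m-1}=g_m\}$, let $\widetilde{L}:Z_m\to\mathcal{L}^m$ be $\widetilde L(g_1,\dots,g_m)=(L(g_1),\dots,L(g_m))$, and let $\pi_i:G^m\to G$ be the $i$-th coordinate projection. $L$ is called $m$-friendly if for every $l=(l_1,\dots,l_m)\in\widetilde{L}(Z_m)$ and every $i=1,\dots,m$ one has $\pi_i(\widetilde{L}^{-1}(l))=L^{-1}(l_i)$. $L$ is friendly if it is $m$-friendly for all $m\ge3$. *)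

theory Defs
  imports Main
begin

text \<open>Tuples (g_1,...,g_m) are lists of length m; coordinate i (1-based in the paper)
 is list index i-1.\<close>

definition Zset :: "nat \<Rightarrow> ('a::ab_group_add) list set" where
  "Zset m = {gs. length gs = m \<and> sum_list (take (m - 1) gs) = gs ! (m - 1)}"

definition Ltilde :: "('a \<Rightarrow> 'l) \<Rightarrow> 'a list \<Rightarrow> 'l list" where
  "Ltilde L gs = map L gs"

definition m_friendly :: "nat \<Rightarrow> (('a::ab_group_add) \<Rightarrow> 'l) \<Rightarrow> bool" where
  "m_friendly m L \<longleftrightarrow>
     (\<forall>l \<in> Ltilde L ` Zset m. \<forall>i < m.
        (\<lambda>gs. gs ! i) ` {gs \<in> Zset m. Ltilde L gs = l} = L -` {l ! i})"

definition friendly :: "(('a::ab_group_add) \<Rightarrow> 'l) \<Rightarrow> bool" where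
  "friendly L \<longleftrightarrow> (\<forall>m \<ge> 3. m_friendly m L)"

end

theory Submission
  imports Defs
begin

lemma fr3:
  fixes L :: "'a::ab_group_add \<Rightarrow> 'l"
  assumes "m_friendly 3 L"
  shows fr3_1: "L a' = L a \<Longrightarrow> \<exists>b'. L b' = L b \<and> L (a' + b') = L (a + b)"
    and fr3_2: "L b' = L b \<Longrightarrow> \<exists>a'. L a' = L a \<and> L (a' + b') = L (a + b)"
    and fr3_3: "L c' = L (a + b) \<Longrightarrow> \<exists>a' b'. L a' = L a \<and> L b' = L b \<and> a' + b' = c'"
proof -
  have Z: "[a, b, a + b] \<in> Zset 3" by (simp add: Zset_def)
  have Zi: "gs \<in> Zset 3 \<longleftrightarrow> (\<exists>x y. gs = [x, y, x + y])" for gs :: "'a list"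
  proof
    assume "gs \<in> Zset 3"
    then show "\<exists>x y. gs = [x, y, x + y]"
      by (auto simp: Zset_def length_Suc_conv numeral_3_eq_3)
  qed (auto simp: Zset_def)
  have M: "(\<lambda>gs. gs ! i) ` {gs \<in> Zset 3. Ltilde L gs = [L a, L b, L (a+b)]} = L -` {[L a, L b, L (a+b)] ! i}"
    if "i < 3" for i
  proof -
    have "[L a, L b, L (a+b)] = Ltilde L [a, b, a + b]" by (simp add: Ltilde_def)
    then have "[L a, L b, L (a+b)] \<in> Ltilde L ` Zset 3" using Z by blast
    with assms that show ?thesis unfolding m_friendly_def by blast
  qed
  show "L a' = L a \<Longrightarrow> \<exists>b'. L b' = L b \<and> L (a' + b') = L (a + b)"
  proof -
    assume h: "L a' = L a"
    then have "a' \<in> (\<lambda>gs. gs ! 0) ` {gs \<in> Zset 3. Ltilde L gs = [L a, L b, L (a+b)]}"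
      using M[of 0] by simp
    then show ?thesis by (auto simp: Zi Ltilde_def)
  qed
  show "L b' = L b \<Longrightarrow> \<exists>a'. L a' = L a \<and> L (a' + b') = L (a + b)"
  proof -
    assume h: "L b' = L b"
    then have "b' \<in> (\<lambda>gs. gs ! 1) ` {gs \<in> Zset 3. Ltilde L gs = [L a, L b, L (a+b)]}"
      using M[of 1] by simp
    then show ?thesis by (auto simp: Zi Ltilde_def)
  qed
  show "L c' = L (a + b) \<Longrightarrow> \<exists>a' b'. L a' = L a \<and> L b' = L b \<and> a' + b' = c'"
  proof -
    assume h: "L c' = L (a + b)"
    then have "c' \<in> (\<lambda>gs. gs ! 2) ` {gs \<in> Zset 3. Ltilde L gs = [L a, L b, L (a+b)]}"
      using M[of 2] by simp
    then show ?thesis by (auto simp: Zi Ltilde_def)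
  qed
qed

lemma main:
  fixes L :: "'a::ab_group_add \<Rightarrow> 'l"
  assumes F: "m_friendly 3 L"
  shows "xs \<noteq> [] \<Longrightarrow>
    (\<forall>i < length xs. \<forall>h. L h = L (xs ! i) \<longrightarrow>
       (\<exists>ys. map L ys = map L xs \<and> ys ! i = h \<and> L (sum_list ys) = L (sum_list xs)))
  \<and> (\<forall>h. L h = L (sum_list xs) \<longrightarrow> (\<exists>ys. map L ys = map L xs \<and> sum_list ys = h))"
proof (induction xs rule: rev_induct)
  case Nil
  then show ?case by simp
next
  case (snoc b xs)
  show ?case
  proof (cases "xs = []")
    case True
    show ?thesis
    proof (intro conjI allI impI)
      fix i h assume "i < length (xs @ [b])" "L h = L ((xs @ [b]) ! i)"
      then show "\<exists>ys. map L ys = map L (xs @ [b]) \<and> ys ! i = h \<and> L (sum_list ys) = L (sum_list (xs @ [b]))"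
        using True by (intro exI[of _ "[h]"]) simp
    next
      fix h assume "L h = L (sum_list (xs @ [b]))"
      then show "\<exists>ys. map L ys = map L (xs @ [b]) \<and> sum_list ys = h"
        using True by (intro exI[of _ "[h]"]) simp
    qed
  next
    case False
    with snoc.IH have Q: "\<And>i h. i < length xs \<Longrightarrow> L h = L (xs ! i) \<Longrightarrow>
       (\<exists>ys. map L ys = map L xs \<and> ys ! i = h \<and> L (sum_list ys) = L (sum_list xs))"
      and R: "\<And>h. L h = L (sum_list xs) \<Longrightarrow> (\<exists>ys. map L ys = map L xs \<and> sum_list ys = h)"
      by blast+
    have "L (sum_list ys + b') = L (sum_list (xs @ [b]))"
      if "L (sum_list ys + b') = L (sum_list xs + b)" for ys b'
      using that by simp
    show ?thesis
    proof (intro conjI allI impI)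
      fix i h
      assume i: "i < length (xs @ [b])" and h: "L h = L ((xs @ [b]) ! i)"
      show "\<exists>ys. map L ys = map L (xs @ [b]) \<and> ys ! i = h \<and> L (sum_list ys) = L (sum_list (xs @ [b]))"
      proof (cases "i < length xs")
        case True
        with h have "L h = L (xs ! i)" by (simp add: nth_append)
        from Q[OF True this] obtain ys where ys: "map L ys = map L xs" "ys ! i = h"
          "L (sum_list ys) = L (sum_list xs)" by blast
        from fr3_1[OF F ys(3), of b] obtain b' where "L b' = L b"
          "L (sum_list ys + b') = L (sum_list xs + b)" by blast
        moreover have "length ys = length xs" using ys(1) by (metis length_map)
        ultimately show ?thesis using ys True
          by (intro exI[of _ "ys @ [b']"]) (simp add: nth_append)
      next
        case False
        with i have ii: "i = length xs" by simp
        with h have "L h = L b" by simp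
        from fr3_2[OF F this, of "sum_list xs"] obtain a' where
          "L a' = L (sum_list xs)" "L (a' + h) = L (sum_list xs + b)" by blast
        moreover from R[OF this(1)] obtain ys where ys: "map L ys = map L xs" "sum_list ys = a'"
          by blast
        moreover have "length ys = length xs" using ys(1) by (metis length_map)
        ultimately show ?thesis using ii \<open>L h = L b\<close>
          by (intro exI[of _ "ys @ [h]"]) (simp add: nth_append)
      qed
    next
      fix h
      assume h: "L h = L (sum_list (xs @ [b]))"
      then have "L h = L (sum_list xs + b)" by simp
      from fr3_3[OF F this] obtain a' b' where ab: "L a' = L (sum_list xs)" "L b' = L b" "a' + b' = h"
        by blast
      from R[OF ab(1)] obtain ys where ys: "map L ys = map L xs" "sum_list ys = a'" by blast
      show "\<exists>ys. map L ys = map L (xs @ [b]) \<and> sum_list ys = h"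
        using ys ab by (intro exI[of _ "ys @ [b']"]) simp
    qed
  qed
qed

theorem lemma3p5:
  fixes L :: "'a::{ab_group_add, finite} \<Rightarrow> 'l::finite"
  assumes "m_friendly 3 L"
  shows "friendly L"
  unfolding friendly_def
proof (intro allI impI)
  fix m :: nat
  assume m: "m \<ge> 3"
  show "m_friendly m L"
    unfolding m_friendly_def
  proof (intro ballI allI impI)
    fix l i
    assume l: "l \<in> Ltilde L ` Zset m" and i: "i < m"
    then obtain gs where gs: "gs \<in> Zset m" "l = map L gs" by (auto simp: Ltilde_def)
    define xs where "xs = take (m - 1) gs"
    have len: "length gs = m" and gsum: "sum_list xs = gs ! (m - 1)"
      using gs by (auto simp: Zset_def xs_def)
    have gsx: "gs = xs @ [sum_list xs]"
    proof -
      have "drop (m - 1) gs = gs ! (m - 1) # drop (Suc (m - 1)) gs"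
        using len m by (intro Cons_nth_drop_Suc[symmetric]) simp
      also have "drop (Suc (m - 1)) gs = []" using len m by simp
      finally have "drop (m - 1) gs = [sum_list xs]" using gsum by simp
      then show ?thesis unfolding xs_def by (metis append_take_drop_id)
    qed
    have lx: "length xs = m - 1" using len m by (simp add: xs_def)
    have ne: "xs \<noteq> []" using lx m by auto
    note MM = main[OF assms ne]
    have Zc: "ys @ [sum_list ys] \<in> Zset m" if "length ys = m - 1" for ys :: "'a list"
      using that m by (simp add: Zset_def nth_append)
    show "(\<lambda>gs. gs ! i) ` {gs \<in> Zset m. Ltilde L gs = l} = L -` {l ! i}"
    proof
      show "(\<lambda>gs. gs ! i) ` {gs \<in> Zset m. Ltilde L gs = l} \<subseteq> L -` {l ! i}"
        using i by (auto simp: Ltilde_def Zset_def)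
    next
      show "L -` {l ! i} \<subseteq> (\<lambda>gs. gs ! i) ` {gs \<in> Zset m. Ltilde L gs = l}"
      proof
        fix h assume "h \<in> L -` {l ! i}"
        then have h: "L h = L (gs ! i)" using gs i len by simp
        show "h \<in> (\<lambda>gs. gs ! i) ` {gs \<in> Zset m. Ltilde L gs = l}"
        proof (cases "i < m - 1")
          case True
          then have "L h = L (xs ! i)" using h gsx lx by (simp add: nth_append)
          with MM True lx obtain ys where ys: "map L ys = map L xs" "ys ! i = h"
            "L (sum_list ys) = L (sum_list xs)" by auto
          have ly: "length ys = m - 1" using ys(1) lx by (metis length_map)
          show ?thesis
            apply (rule image_eqI[of _ _ "ys @ [sum_list ys]"])
            using ys ly True gs gsx Zc[OF ly] by (auto simp: nth_append Ltilde_def)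
        next
          case False
          then have ii: "i = m - 1" using i by simp
          then have hL: "L h = L (sum_list xs)" using h gsx lx by (simp add: nth_append)
          with MM obtain ys where ys: "map L ys = map L xs" "sum_list ys = h" by auto
          have ly: "length ys = m - 1" using ys(1) lx by (metis length_map)
          show ?thesis
            apply (rule image_eqI[of _ _ "ys @ [sum_list ys]"])
            using ys ly ii gs gsx hL Zc[OF ly] by (auto simp: nth_append Ltilde_def)
        qed
      qed
    qed
  qed
qed

end
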